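(* Let $n\ge1$, $\beta\in\mathbb C\setminus\{0\}$. (i) The assignment $\tilde T_{ij}(u)\mapsto\delta_{ij}+E_{ij}\,\frac{1}{u+\beta/u}$ (with $\frac1{u+\beta/u}$ expanded in powers of $u^{-1}$, and the map defined by comparing coefficients of $u^{-r}$) defines a surjective algebra homomorphism $OY_\beta(\mathfrak{gl}_n)\to U(\mathfrak{gl}_n)$, and the assignment $E_{ij}\mapsto\tilde t^{(1)}_{ij}$ defines an embedding $U(\mathfrak{gl}_n)\to OY_\beta(\mathfrak{gl}_n)$. (ii) The assignment $\tilde T_{ij}(u)\mapsto T_{ij}(u+\beta/u)$ defines a homomorphism $OY_\beta(\mathfrak{gl}_n)[u^{-1}]\to Y(\mathfrak{gl}_n)[u^{-1}]$. (iii) For any $f(u)=1+\sum_{k\ge1}f_ku^{-k}\in\mathbb C[[u^{-1}]]$ and any invertible $B\in GL_n(\mathbb C)$, the maps (a) $\tilde T(u)\mapsto f(u)\tilde T(u)$ and (b) $\tilde T(u)\mapsto B\tilde T(u)B^{-1}$ define automorphisms of $OY_\beta(\mathfrak{gl}_n)$.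
   Context: $OY_\beta(\mathfrak{gl}_n)$ is the unital associative $\mathbb C$-algebra with generators $\tilde t^{(r)}_{ij}$ ($1\le i,j\le n$, $r\ge1$) subject to the relations $\left(u+\frac\beta u-v-\frac\beta v\right)[\tilde T_{ij}(u),\tilde T_{kl}(v)]=\tilde T_{kj}(u)\tilde T_{il}(v)-\tilde T_{kj}(v)\tilde T_{il}(u)$ for all $i,j,k,l$, where $\tilde T_{ij}(u)=\delta_{ij}+\sum_{r\ge1}\tilde t^{(r)}_{ij}u^{-r}$ and $\tilde T(u)=(\tilde T_{ij}(u))_{i,j}$ (equivalently, $[\tilde t^{(r+1)}_{ij}+\beta\tilde t^{(r-1)}_{ij},\tilde t^{(s)}_{kl}]-[\tilde t^{(r)}_{ij},\tilde t^{(s+1)}_{kl}+\beta\tilde t^{(s-1)}_{kl}]=\tilde t^{(r)}_{kj}\tilde t^{(s)}_{il}-\tilde t^{(s)}_{kj}\tilde t^{(r)}_{il}$ for $r,s\ge0$ with $\tilde t^{(0)}_{ij}=\delta_{ij}$, $\tilde t^{(-1)}_{ij}=0$). $E_{ij}$ are the standard matrix units spanning $\mathfrak{gl}_n$. $Y(\mathfrak{gl}_n)$ is the Yangian with generators $t^{(r)}_{ij}$ and relations $[t^{(r+1)}_{ij},t^{(s)}_{kl}]-[t^{(r)}_{ij},t^{(s+1)}_{kl}]=t^{(r)}_{kj}t^{(s)}_{il}-t^{(s)}_{kj}t^{(r)}_{il}$ ($r,s\ge0$, $t^{(0)}_{ij}=\delta_{ij}$), and $T_{ij}(w)=\sum_{r\ge0}t^{(r)}_{ij}w^{-r}$;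 $T_{ij}(u+\beta/u)$ is expanded in powers of $u^{-1}$. *)

theory Defs
  imports "HOL-Analysis.Analysis" "HOL-Library.Poly_Mapping"
          "HOL-Computational_Algebra.Formal_Power_Series"
begin

text \<open>The free unital associative C-algebra on a generator type 'g: finitely supported
  C-linear combinations of words (lists) in the generators.\<close>
type_synonym 'g falg = "'g list \<Rightarrow>\<^sub>0 complex"

definition fa_const :: "complex \<Rightarrow> 'g falg" where
  "fa_const c = Poly_Mapping.single [] c"

definition fa_var :: "'g \<Rightarrow> 'g falg" where
  "fa_var g = Poly_Mapping.single [g] 1"

definition fa_mult :: "'g falg \<Rightarrow> 'g falg \<Rightarrow> 'g falg" where
  "fa_mult p q = (\<Sum>a\<in>Poly_Mapping.keys p. \<Sum>b\<in>Poly_Mapping.keys q. Poly_Mapping.single (a @ b) (Poly_Mapping.lookup p a * Poly_Mapping.lookup q b))"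

definition fa_smult :: "complex \<Rightarrow> 'g falg \<Rightarrow> 'g falg" where
  "fa_smult c p = fa_mult (fa_const c) p"

definition fa_comm :: "'g falg \<Rightarrow> 'g falg \<Rightarrow> 'g falg" where
  "fa_comm p q = fa_mult p q - fa_mult q p"

definition fa_subst :: "('g \<Rightarrow> 'h falg) \<Rightarrow> 'g falg \<Rightarrow> 'h falg" where
  "fa_subst \<phi> p = (\<Sum>w\<in>Poly_Mapping.keys p. fa_smult (Poly_Mapping.lookup p w) (foldr (\<lambda>g acc. fa_mult (\<phi> g) acc) w (fa_const 1)))"

inductive_set fa_ideal :: "'g falg set \<Rightarrow> 'g falg set" for R where
  gen: "x \<in> R \<Longrightarrow> x \<in> fa_ideal R"
| zero: "0 \<in> fa_ideal R"
| add: "x \<in> fa_ideal R \<Longrightarrow> y \<in> fa_ideal R \<Longrightarrow> x + y \<in> fa_ideal R"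
| lmult: "x \<in> fa_ideal R \<Longrightarrow> fa_mult a x \<in> fa_ideal R"
| rmult: "x \<in> fa_ideal R \<Longrightarrow> fa_mult x a \<in> fa_ideal R"

text \<open>For presented algebras A = F('g)/(R), B = F('h)/(S) and an assignment \<phi> of
  generators of A to elements of F('h):\<close>

text \<open>\<phi> defines an algebra homomorphism A \<rightarrow> B.\<close>
definition pres_hom :: "'g falg set \<Rightarrow> 'h falg set \<Rightarrow> ('g \<Rightarrow> 'h falg) \<Rightarrow> bool" where
  "pres_hom R S \<phi> \<longleftrightarrow> (\<forall>p\<in>fa_ideal R. fa_subst \<phi> p \<in> fa_ideal S)"

text \<open>the induced map A \<rightarrow> B is surjective\<close>
definition pres_surj :: "'g falg set \<Rightarrow> 'h falg set \<Rightarrow> ('g \<Rightarrow> 'h falg) \<Rightarrow> bool" where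
  "pres_surj R S \<phi> \<longleftrightarrow> (\<forall>q. \<exists>p. q - fa_subst \<phi> p \<in> fa_ideal S)"

text \<open>the induced map A \<rightarrow> B is injective\<close>
definition pres_inj :: "'g falg set \<Rightarrow> 'h falg set \<Rightarrow> ('g \<Rightarrow> 'h falg) \<Rightarrow> bool" where
  "pres_inj R S \<phi> \<longleftrightarrow> (\<forall>p. fa_subst \<phi> p \<in> fa_ideal S \<longrightarrow> p \<in> fa_ideal R)"

definition pres_aut :: "'g falg set \<Rightarrow> ('g \<Rightarrow> 'g falg) \<Rightarrow> bool" where
  "pres_aut R \<phi> \<longleftrightarrow> pres_hom R R \<phi> \<and> pres_inj R R \<phi> \<and> pres_surj R R \<phi>"

definition kdelta :: "'n \<Rightarrow> 'n \<Rightarrow> complex" where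
  "kdelta i j = (if i = j then 1 else 0)"

text \<open>OY_beta(gl_n): generator (i,j,m) stands for t~^(m+1)_ij (m \<ge> 0).
  oy_t i j r is t~^(r)_ij for r \<ge> 1, with t~^(0)_ij = delta_ij and t~^(-1)_ij = 0.\<close>
definition oy_t :: "'n \<Rightarrow> 'n \<Rightarrow> int \<Rightarrow> ('n \<times> 'n \<times> nat) falg" where
  "oy_t i j r = (if r < 0 then 0 else if r = 0 then fa_const (kdelta i j)
                 else fa_var (i, j, nat (r - 1)))"

definition OY_rels :: "complex \<Rightarrow> ('n \<times> 'n \<times> nat) falg set" where
  "OY_rels \<beta> = {fa_comm (oy_t i j (int r + 1) + fa_smult \<beta> (oy_t i j (int r - 1))) (oy_t k l (int s))
      - fa_comm (oy_t i j (int r)) (oy_t k l (int s + 1) + fa_smult \<beta> (oy_t k l (int s - 1)))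
      - (fa_mult (oy_t k j (int r)) (oy_t i l (int s)) - fa_mult (oy_t k j (int s)) (oy_t i l (int r)))
      | i j k l r s. True}"

text \<open>Yangian Y(gl_n): generator (i,j,m) stands for t^(m+1)_ij; y_t i j 0 = delta_ij.\<close>
definition y_t :: "'n \<Rightarrow> 'n \<Rightarrow> nat \<Rightarrow> ('n \<times> 'n \<times> nat) falg" where
  "y_t i j r = (if r = 0 then fa_const (kdelta i j) else fa_var (i, j, r - 1))"

definition Y_rels :: "('n \<times> 'n \<times> nat) falg set" where
  "Y_rels = {fa_comm (y_t i j (r + 1)) (y_t k l s) - fa_comm (y_t i j r) (y_t k l (s + 1))
      - (fa_mult (y_t k j r) (y_t i l s) - fa_mult (y_t k j s) (y_t i l r))
      | i j k l r s. True}"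

definition U_rels :: "('n \<times> 'n) falg set" where
  "U_rels = {fa_comm (fa_var (i, j)) (fa_var (k, l))
      - (fa_smult (kdelta k j) (fa_var (i, l)) - fa_smult (kdelta i l) (fa_var (k, j)))
      | i j k l. True}"

text \<open>The series 1/(u + beta/u) written in the variable x = u^{-1}: x / (1 + beta x^2).
  Its x^r coefficient is the coefficient of u^{-r}.\<close>
definition c_beta :: "complex \<Rightarrow> complex fps" where
  "c_beta \<beta> = fps_X / (1 + fps_const \<beta> * fps_X ^ 2)"

text \<open>(i) T~_ij(u) \<mapsto> delta_ij + E_ij/(u+beta/u): t~^(r)_ij \<mapsto> [u^{-r}] (E_ij/(u+beta/u)).\<close>
definition ev_map :: "complex \<Rightarrow> ('n \<times> 'n \<times> nat) \<Rightarrow> ('n \<times> 'n) falg" where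
  "ev_map \<beta> = (\<lambda>(i, j, m). fa_smult (fps_nth (c_beta \<beta>) (Suc m)) (fa_var (i, j)))"

definition oy_emb :: "('n \<times> 'n) \<Rightarrow> ('n \<times> 'n \<times> nat) falg" where
  "oy_emb = (\<lambda>(i, j). oy_t i j 1)"

text \<open>(ii) T~_ij(u) \<mapsto> T_ij(u + beta/u) = sum_s t^(s)_ij (u+beta/u)^{-s}:
  t~^(r)_ij \<mapsto> sum_{s=0..r} [u^{-r}](u+beta/u)^{-s} t^(s)_ij (terms s > r vanish).\<close>
definition yan_map :: "complex \<Rightarrow> ('n \<times> 'n \<times> nat) \<Rightarrow> ('n \<times> 'n \<times> nat) falg" where
  "yan_map \<beta> = (\<lambda>(i, j, m). \<Sum>s\<in>{0..Suc m}.
      fa_smult (fps_nth (c_beta \<beta> ^ s) (Suc m)) (y_t i j s))"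

text \<open>(iii a) T~(u) \<mapsto> f(u) T~(u), f given as a power series in x = u^{-1}:
  t~^(r)_ij \<mapsto> sum_{s=0..r} f_{r-s} t~^(s)_ij.\<close>
definition mult_map :: "complex fps \<Rightarrow> ('n \<times> 'n \<times> nat) \<Rightarrow> ('n \<times> 'n \<times> nat) falg" where
  "mult_map f = (\<lambda>(i, j, m). \<Sum>s\<in>{0..Suc m}.
      fa_smult (fps_nth f (Suc m - s)) (oy_t i j (int s)))"

definition conj_map :: "complex^'n^'n \<Rightarrow> ('n::finite \<times> 'n \<times> nat) \<Rightarrow> ('n \<times> 'n \<times> nat) falg" where
  "conj_map B = (\<lambda>(i, j, m). \<Sum>a\<in>UNIV. \<Sum>b\<in>UNIV.
      fa_smult (B $ i $ a * matrix_inv B $ b $ j) (oy_t a b (int (Suc m))))"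

end

theory Submission
  imports Defs
begin


instantiation list :: (type) monoid_add
begin
definition zero_list_def: "0 = []"
definition plus_list_def: "xs + ys = xs @ ys"
instance by standard (auto simp: zero_list_def plus_list_def)
end

lemma fa_expansion: "(p::'g falg) = (\<Sum>w\<in>Poly_Mapping.keys p. Poly_Mapping.single w (Poly_Mapping.lookup p w))"
proof (rule poly_mapping_eqI)
  fix k
  have *: "finite I \<Longrightarrow> Poly_Mapping.lookup (\<Sum>w\<in>I. Poly_Mapping.single w (Poly_Mapping.lookup p w)) k
     = (if k \<in> I then Poly_Mapping.lookup p k else 0)" for I
    by (induction I rule: finite_induct) (auto simp: lookup_single lookup_add when_def)
  show "Poly_Mapping.lookup p k = Poly_Mapping.lookup (\<Sum>w\<in>Poly_Mapping.keys p. Poly_Mapping.single w (Poly_Mapping.lookup p w)) k"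
    by (simp add: * in_keys_iff)
qed

lemma fa_mult_eq: "fa_mult p q = p * q"
proof -
  have "p * q = (\<Sum>a\<in>Poly_Mapping.keys p. Poly_Mapping.single a (Poly_Mapping.lookup p a)) * (\<Sum>b\<in>Poly_Mapping.keys q. Poly_Mapping.single b (Poly_Mapping.lookup q b))"
    using fa_expansion[of p] fa_expansion[of q] by simp
  also have "\<dots> = fa_mult p q"
    apply (simp add: fa_mult_def sum_distrib_left sum_distrib_right mult_single plus_list_def)
    by (rule sum.swap)
  finally show ?thesis by simp
qed

lemma fa_const_eq: "fa_const c = Poly_Mapping.single 0 c"
  by (simp add: fa_const_def zero_list_def)

lemma fa_const_1[simp]: "fa_const 1 = 1" by (simp add: fa_const_eq)
lemma fa_const_0[simp]: "fa_const 0 = 0" by (simp add: fa_const_eq)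
lemma fa_const_mult: "fa_const (a*b) = fa_const a * fa_const b"
  by (simp add: fa_const_eq mult_single)
lemma fa_const_add: "fa_const (a+b) = fa_const a + fa_const b"
  by (simp add: fa_const_eq single_add)
lemma fa_const_diff: "fa_const (a-b) = fa_const a - fa_const b"
  by (simp add: fa_const_eq single_diff)
lemma fa_const_uminus: "fa_const (-a) = - fa_const a"
  by (simp add: fa_const_eq single_uminus)
lemma fa_const_sum: "fa_const (sum f A) = (\<Sum>x\<in>A. fa_const (f x))"
  by (induction A rule: infinite_finite_induct) (auto simp: fa_const_add)

lemma fa_const_central: "fa_const c * p = p * fa_const c"
proof -
  have "fa_const c * p = fa_const c * (\<Sum>w\<in>Poly_Mapping.keys p. Poly_Mapping.single w (Poly_Mapping.lookup p w))"
    using fa_expansion[of p] by simp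
  also have "\<dots> = (\<Sum>w\<in>Poly_Mapping.keys p. Poly_Mapping.single w (Poly_Mapping.lookup p w)) * fa_const c"
    by (simp add: fa_const_eq sum_distrib_left sum_distrib_right mult_single mult.commute)
  finally show ?thesis using fa_expansion[of p] by simp
qed

lemma fa_const_left_comm: "p * (fa_const c * q) = fa_const c * (p * q)"
  by (metis fa_const_central mult.assoc)

lemma fa_const_mult2: "(fa_const a * x) * (fa_const b * y) = fa_const (a*b) * (x*y)"
  by (simp add: fa_const_mult mult.assoc) (metis fa_const_central mult.assoc)

lemma fa_smult_eq: "fa_smult c p = fa_const c * p"
  by (simp add: fa_smult_def fa_mult_eq)

lemma fa_comm_eq: "fa_comm p q = p * q - q * p"
  by (simp add: fa_comm_def fa_mult_eq)


definition fa_word :: "('g \<Rightarrow> 'h falg) \<Rightarrow> 'g list \<Rightarrow> 'h falg" where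
  "fa_word \<phi> w = foldr (\<lambda>g acc. fa_mult (\<phi> g) acc) w (fa_const 1)"

lemma fa_word_simps[simp]: "fa_word \<phi> [] = 1" "fa_word \<phi> (g # w) = \<phi> g * fa_word \<phi> w"
  by (simp_all add: fa_word_def fa_mult_eq)

lemma fa_word_append: "fa_word \<phi> (a @ b) = fa_word \<phi> a * fa_word \<phi> b"
  by (induction a) (simp_all add: mult.assoc)

lemma fa_subst_word: "fa_subst \<phi> p = (\<Sum>w\<in>Poly_Mapping.keys p. fa_const (Poly_Mapping.lookup p w) * fa_word \<phi> w)"
  by (simp add: fa_subst_def fa_word_def fa_smult_eq)

lemma fa_subst_superset:
  assumes "finite S" "Poly_Mapping.keys p \<subseteq> S"
  shows "fa_subst \<phi> p = (\<Sum>w\<in>S. fa_const (Poly_Mapping.lookup p w) * fa_word \<phi> w)"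
  unfolding fa_subst_word
  by (rule sum.mono_neutral_left) (use assms in \<open>auto simp: in_keys_iff\<close>)

lemma fa_subst_add: "fa_subst \<phi> (p + q) = fa_subst \<phi> p + fa_subst \<phi> q"
proof -
  let ?S = "Poly_Mapping.keys p \<union> Poly_Mapping.keys q"
  have "Poly_Mapping.keys (p + q) \<subseteq> ?S" by (rule keys_add)
  then show ?thesis
    by (simp add: fa_subst_superset[of ?S] lookup_add fa_const_add distrib_right sum.distrib)
qed

lemma fa_subst_zero[simp]: "fa_subst \<phi> 0 = 0"
  by (simp add: fa_subst_word)

lemma fa_subst_uminus: "fa_subst \<phi> (- p) = - fa_subst \<phi> p"
  by (metis add_eq_0_iff fa_subst_add fa_subst_zero)

lemma fa_subst_diff: "fa_subst \<phi> (p - q) = fa_subst \<phi> p - fa_subst \<phi> q"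
  by (metis diff_conv_add_uminus fa_subst_add fa_subst_uminus)

lemma fa_subst_sum: "fa_subst \<phi> (sum f A) = (\<Sum>x\<in>A. fa_subst \<phi> (f x))"
  by (induction A rule: infinite_finite_induct) (auto simp: fa_subst_add)

lemma fa_subst_single: "fa_subst \<phi> (Poly_Mapping.single w c) = fa_const c * fa_word \<phi> w"
  by (simp add: fa_subst_superset[of "{w}"])

lemma fa_subst_mult: "fa_subst \<phi> (p * q) = fa_subst \<phi> p * fa_subst \<phi> q"
proof -
  have "fa_subst \<phi> (p * q) = fa_subst \<phi> ((\<Sum>a\<in>Poly_Mapping.keys p. Poly_Mapping.single a (Poly_Mapping.lookup p a)) * (\<Sum>b\<in>Poly_Mapping.keys q. Poly_Mapping.single b (Poly_Mapping.lookup q b)))"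
    using fa_expansion[of p] fa_expansion[of q] by simp
  also have "\<dots> = (\<Sum>a\<in>Poly_Mapping.keys p. fa_const (Poly_Mapping.lookup p a) * fa_word \<phi> a) * (\<Sum>b\<in>Poly_Mapping.keys q. fa_const (Poly_Mapping.lookup q b) * fa_word \<phi> b)"
    by (simp add: sum_distrib_left sum_distrib_right mult_single fa_subst_sum fa_subst_single
        plus_list_def fa_word_append fa_const_mult2)
  also have "\<dots> = fa_subst \<phi> p * fa_subst \<phi> q" by (simp add: fa_subst_word)
  finally show ?thesis .
qed

lemma fa_subst_const[simp]: "fa_subst \<phi> (fa_const c) = fa_const c"
  by (simp add: fa_const_def fa_subst_single)

lemma fa_subst_one[simp]: "fa_subst \<phi> 1 = 1"
  using fa_subst_const[of \<phi> 1] by simp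

lemma fa_subst_var[simp]: "fa_subst \<phi> (fa_var g) = \<phi> g"
  by (simp add: fa_var_def fa_subst_single)

lemma fa_subst_smult: "fa_subst \<phi> (fa_const c * p) = fa_const c * fa_subst \<phi> p"
  by (simp add: fa_subst_mult)

lemma fa_word_subst: "fa_subst \<psi> (fa_word \<phi> w) = fa_word (\<lambda>g. fa_subst \<psi> (\<phi> g)) w"
  by (induction w) (simp_all add: fa_subst_mult)

lemma fa_subst_comp: "fa_subst \<psi> (fa_subst \<phi> p) = fa_subst (\<lambda>g. fa_subst \<psi> (\<phi> g)) p"
  by (simp add: fa_subst_word[of \<phi>] fa_subst_sum fa_subst_smult fa_word_subst)
     (simp add: fa_subst_word)

lemma single_Nil_1[simp]: "Poly_Mapping.single [] (1::complex) = 1"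
  by (metis single_one zero_list_def)

lemma fa_word_var: "fa_word fa_var w = Poly_Mapping.single w 1"
  by (induction w) (simp_all add: fa_var_def mult_single plus_list_def)

lemma fa_subst_var_id: "fa_subst fa_var p = p"
proof -
  have "fa_subst fa_var p = (\<Sum>w\<in>Poly_Mapping.keys p. Poly_Mapping.single w (Poly_Mapping.lookup p w))"
    by (simp add: fa_subst_word fa_word_var fa_const_eq mult_single)
  then show ?thesis using fa_expansion[of p] by simp
qed

lemma fa_subst_cong: "(\<And>g. \<phi> g = \<psi> g) \<Longrightarrow> fa_subst \<phi> p = fa_subst \<psi> p"
  by (metis ext)


section \<open>Ideals\<close>

lemma ideal_lmult: "x \<in> fa_ideal R \<Longrightarrow> a * x \<in> fa_ideal R"
  using fa_ideal.lmult[of x R a] by (simp add: fa_mult_eq)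
lemma ideal_rmult: "x \<in> fa_ideal R \<Longrightarrow> x * a \<in> fa_ideal R"
  using fa_ideal.rmult[of x R a] by (simp add: fa_mult_eq)
lemma ideal_uminus: "x \<in> fa_ideal R \<Longrightarrow> - x \<in> fa_ideal R"
  using ideal_lmult[of x R "fa_const (-1)"] by (simp add: fa_const_uminus)
lemma ideal_diff: "x \<in> fa_ideal R \<Longrightarrow> y \<in> fa_ideal R \<Longrightarrow> x - y \<in> fa_ideal R"
  by (metis diff_conv_add_uminus fa_ideal.add ideal_uminus)
lemma ideal_sum: "(\<And>a. a \<in> A \<Longrightarrow> f a \<in> fa_ideal R) \<Longrightarrow> sum f A \<in> fa_ideal R"
  by (induction A rule: infinite_finite_induct) (auto intro: fa_ideal.zero fa_ideal.add)

lemma pres_hom_intro: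
  assumes "\<And>r. r \<in> R \<Longrightarrow> fa_subst \<phi> r \<in> fa_ideal S"
  shows "pres_hom R S \<phi>"
  unfolding pres_hom_def
proof
  fix p assume "p \<in> fa_ideal R"
  then show "fa_subst \<phi> p \<in> fa_ideal S"
    by induction (auto simp: assms fa_subst_add fa_mult_eq fa_subst_mult
        intro: fa_ideal.zero fa_ideal.add ideal_lmult ideal_rmult)
qed

lemma pres_inj_intro:
  assumes "pres_hom S R \<psi>" "\<And>g. fa_subst \<psi> (\<phi> g) = fa_var g"
  shows "pres_inj R S \<phi>"
  unfolding pres_inj_def
proof (intro allI impI)
  fix p assume "fa_subst \<phi> p \<in> fa_ideal S"
  then have "fa_subst \<psi> (fa_subst \<phi> p) \<in> fa_ideal R"
    using assms(1) by (simp add: pres_hom_def)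
  also have "fa_subst \<psi> (fa_subst \<phi> p) = p"
    by (simp add: fa_subst_comp assms(2) fa_subst_var_id)
  finally show "p \<in> fa_ideal R" .
qed

lemma pres_surj_intro:
  assumes "\<And>g. fa_subst \<phi> (\<psi> g) = fa_var g"
  shows "pres_surj R S \<phi>"
  unfolding pres_surj_def
proof
  fix q
  have "q - fa_subst \<phi> (fa_subst \<psi> q) = 0"
    by (simp add: fa_subst_comp assms fa_subst_var_id)
  then show "\<exists>p. q - fa_subst \<phi> p \<in> fa_ideal S" using fa_ideal.zero by metis
qed

lemma pres_aut_intro:
  assumes "pres_hom R R \<phi>" "pres_hom R R \<psi>"
    "\<And>g. fa_subst \<psi> (\<phi> g) = fa_var g" "\<And>g. fa_subst \<phi> (\<psi> g) = fa_var g"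
  shows "pres_aut R \<phi>"
  unfolding pres_aut_def using assms pres_inj_intro pres_surj_intro by metis

section \<open>Generic relators\<close>

definition cm :: "'h falg \<Rightarrow> 'h falg \<Rightarrow> 'h falg" where "cm x y = x * y - y * x"

definition Zp :: "complex \<Rightarrow> ('n \<Rightarrow> 'n \<Rightarrow> int \<Rightarrow> 'h falg) \<Rightarrow> 'n \<Rightarrow> 'n \<Rightarrow> int \<Rightarrow> 'h falg" where
  "Zp \<gamma> Z i j r = Z i j (r + 1) + fa_const \<gamma> * Z i j (r - 1)"

definition Rl :: "complex \<Rightarrow> ('n \<Rightarrow> 'n \<Rightarrow> int \<Rightarrow> 'h falg) \<Rightarrow> 'n \<Rightarrow> 'n \<Rightarrow> 'n \<Rightarrow> 'n \<Rightarrow> int \<Rightarrow> int \<Rightarrow> 'h falg" where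
  "Rl \<gamma> Z i j k l r s = cm (Zp \<gamma> Z i j r) (Z k l s) - cm (Z i j r) (Zp \<gamma> Z k l s)
      - (Z k j r * Z i l s - Z k j s * Z i l r)"

lemma OY_rels_eq: "OY_rels \<beta> = {Rl \<beta> oy_t i j k l (int r) (int s) | i j k l r s. True}"
  by (simp add: OY_rels_def Rl_def Zp_def cm_def fa_comm_eq fa_smult_eq fa_mult_eq)

lemma fa_subst_cm: "fa_subst \<phi> (cm x y) = cm (fa_subst \<phi> x) (fa_subst \<phi> y)"
  by (simp add: cm_def fa_subst_diff fa_subst_mult)

lemma fa_subst_Rl: "fa_subst \<phi> (Rl \<gamma> Z i j k l r s) = Rl \<gamma> (\<lambda>i j t. fa_subst \<phi> (Z i j t)) i j k l r s"
  by (simp add: Rl_def Zp_def fa_subst_cm fa_subst_diff fa_subst_mult fa_subst_add)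


section \<open>Degree mixing\<close>

lemma bil: "(\<Sum>p\<in>P. fa_const (a p) * x p) * (\<Sum>q\<in>Q. fa_const (b q) * y q)
   = (\<Sum>p\<in>P. \<Sum>q\<in>Q. fa_const (a p * b q) * (x p * y q))"
  apply (simp add: sum_distrib_left sum_distrib_right fa_const_mult2)
  by (rule sum.swap)

lemma bil_swap: "(\<Sum>q\<in>Q. fa_const (b q) * y q) * (\<Sum>p\<in>P. fa_const (a p) * x p)
   = (\<Sum>p\<in>P. \<Sum>q\<in>Q. fa_const (a p * b q) * (y q * x p))"
proof -
  have "(\<Sum>q\<in>Q. fa_const (b q) * y q) * (\<Sum>p\<in>P. fa_const (a p) * x p) = (\<Sum>q\<in>Q. \<Sum>p\<in>P. fa_const (a p * b q) * (y q * x p))"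
    by (simp add: bil mult.commute)
  also have "\<dots> = (\<Sum>p\<in>P. \<Sum>q\<in>Q. fa_const (a p * b q) * (y q * x p))" by (rule sum.swap)
  finally show ?thesis .
qed

lemma cm_bil: "cm (\<Sum>p\<in>P. fa_const (a p) * x p) (\<Sum>q\<in>Q. fa_const (b q) * y q)
   = (\<Sum>p\<in>P. \<Sum>q\<in>Q. fa_const (a p * b q) * cm (x p) (y q))"
  unfolding cm_def bil[of a x P b y Q] bil_swap[of b y Q a x P]
  by (simp add: sum_subtractf right_diff_distrib)

lemma cm_const_left: "cm (x + fa_const c) y = cm x y"
  by (simp add: cm_def distrib_left distrib_right fa_const_central)

lemma cm_const_right: "cm x (y + fa_const c) = cm x y"
  by (simp add: cm_def distrib_left distrib_right fa_const_central)

lemma deg_mix: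
  fixes X Z :: "'n \<Rightarrow> 'n \<Rightarrow> int \<Rightarrow> 'h falg"
  assumes rep: "\<And>i j t. t \<in> {int r, int s} \<Longrightarrow> X i j t = (\<Sum>p\<le>N. fa_const (A t p) * Z i j (int p))"
  and sh: "\<And>i j t. t \<in> {int r, int s} \<Longrightarrow>
      Zp \<beta> X i j t = (\<Sum>p\<le>N. fa_const (A t p) * Zp \<gamma> Z i j (int p)) + fa_const (\<kappa> i j t)"
  shows "Rl \<beta> X i j k l (int r) (int s)
     = (\<Sum>p\<le>N. \<Sum>q\<le>N. fa_const (A (int r) p * A (int s) q) * Rl \<gamma> Z i j k l (int p) (int q))"
proof -
  have r: "X a b (int r) = (\<Sum>p\<le>N. fa_const (A (int r) p) * Z a b (int p))" for a b using rep by simp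
  have s: "X a b (int s) = (\<Sum>p\<le>N. fa_const (A (int s) p) * Z a b (int p))" for a b using rep by simp
  have r': "Zp \<beta> X a b (int r) = (\<Sum>p\<le>N. fa_const (A (int r) p) * Zp \<gamma> Z a b (int p)) + fa_const (\<kappa> a b (int r))" for a b using sh by simp
  have s': "Zp \<beta> X a b (int s) = (\<Sum>p\<le>N. fa_const (A (int s) p) * Zp \<gamma> Z a b (int p)) + fa_const (\<kappa> a b (int s))" for a b using sh by simp
  have q: "(\<Sum>p\<le>N. fa_const (A (int s) p) * Z k j (int p)) * (\<Sum>p\<le>N. fa_const (A (int r) p) * Z i l (int p)) = (\<Sum>p\<le>N. \<Sum>q\<le>N. fa_const (A (int r) p * A (int s) q) * (Z k j (int q) * Z i l (int p)))"
    by (rule bil_swap)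
  have p: "(\<Sum>p\<le>N. fa_const (A (int r) p) * Z k j (int p)) * (\<Sum>p\<le>N. fa_const (A (int s) p) * Z i l (int p)) = (\<Sum>p\<le>N. \<Sum>q\<le>N. fa_const (A (int r) p * A (int s) q) * (Z k j (int p) * Z i l (int q)))"
    by (rule bil)
  show ?thesis
    apply (unfold Rl_def r s r' s')
    apply (unfold cm_const_left cm_const_right cm_bil p q)
    by (simp add: sum_subtractf right_diff_distrib)
qed


lemma shift_gen:
  fixes X Z :: "int \<Rightarrow> 'h falg" and A :: "int \<Rightarrow> nat \<Rightarrow> complex"
  assumes rep: "\<And>t. t \<in> {r - 1, r + 1} \<Longrightarrow> X t = (\<Sum>p\<le>Suc M. fa_const (A t p) * Z (int p))"
    and Zm1: "Z (-1) = 0" and Z0: "Z 0 = fa_const z0"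
    and idp: "\<And>p. p \<ge> 1 \<Longrightarrow> A (r + 1) p + \<beta> * A (r - 1) p = A r (p - 1) + \<gamma> * A r (p + 1)"
    and z1: "A r (Suc M) = 0" and z2: "A r (Suc (Suc M)) = 0"
  shows "X (r + 1) + fa_const \<beta> * X (r - 1)
    = (\<Sum>p\<le>Suc M. fa_const (A r p) * (Z (int p + 1) + fa_const \<gamma> * Z (int p - 1)))
      + fa_const ((A (r + 1) 0 + \<beta> * A (r - 1) 0 - \<gamma> * A r 1) * z0)"
proof -
  have S1: "(\<Sum>p\<le>Suc M. fa_const (A r p) * Z (int p + 1)) = (\<Sum>p\<le>M. fa_const (A r p) * Z (int (Suc p)))"
    by (simp add: sum.atMost_Suc z1 add.commute)
  have S2: "(\<Sum>p\<le>Suc M. fa_const (A r p) * Z (int p - 1)) = (\<Sum>p\<le>M. fa_const (A r (Suc p)) * Z (int p))"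
    by (subst sum.atMost_Suc_shift) (simp add: Zm1)
  have L: "X (r + 1) + fa_const \<beta> * X (r - 1) = fa_const (A (r + 1) 0 + \<beta> * A (r - 1) 0) * Z 0
     + (\<Sum>p\<le>M. fa_const (A (r + 1) (Suc p) + \<beta> * A (r - 1) (Suc p)) * Z (int (Suc p)))"
  proof -
    have x: "X t = fa_const (A t 0) * Z 0 + (\<Sum>p\<le>M. fa_const (A t (Suc p)) * Z (int (Suc p)))"
      if "t \<in> {r - 1, r + 1}" for t
      using rep[OF that] by (simp only: sum.atMost_Suc_shift of_nat_0)
    have b: "fa_const \<beta> * X (r - 1) = fa_const (\<beta> * A (r - 1) 0) * Z 0
        + (\<Sum>p\<le>M. fa_const (\<beta> * A (r - 1) (Suc p)) * Z (int (Suc p)))"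
      by (simp only: x[of "r - 1"] insert_iff distrib_left sum_distrib_left mult.assoc[symmetric] fa_const_mult simp_thms)
    have a: "X (r + 1) = fa_const (A (r + 1) 0) * Z 0 + (\<Sum>p\<le>M. fa_const (A (r + 1) (Suc p)) * Z (int (Suc p)))"
      using x[of "r + 1"] by simp
    show ?thesis
      unfolding a b by (simp only: fa_const_add distrib_right sum.distrib add_ac)
  qed
  have R: "(\<Sum>p\<le>Suc M. fa_const (A r p) * (Z (int p + 1) + fa_const \<gamma> * Z (int p - 1)))
     = (\<Sum>p\<le>M. fa_const (A r p) * Z (int (Suc p))) + fa_const \<gamma> * (\<Sum>p\<le>M. fa_const (A r (Suc p)) * Z (int p))"
  proof -
    have c: "fa_const a * (fa_const \<gamma> * x) = fa_const \<gamma> * (fa_const a * x)" for a x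
      by (simp add: mult.assoc[symmetric] fa_const_mult[symmetric] mult.commute)
    show ?thesis
      unfolding distrib_left sum.distrib S1[symmetric] S2[symmetric] sum_distrib_left c ..
  qed
  have R2: "fa_const \<gamma> * (\<Sum>p\<le>M. fa_const (A r (Suc p)) * Z (int p))
     = fa_const (\<gamma> * A r 1) * Z 0 + (\<Sum>p\<le>M. fa_const (\<gamma> * A r (Suc (Suc p))) * Z (int (Suc p)))"
  proof -
    have "(\<Sum>p\<le>M. fa_const (A r (Suc p)) * Z (int p)) = (\<Sum>p\<le>Suc M. fa_const (A r (Suc p)) * Z (int p))"
      by (simp add: z2)
    also have "\<dots> = fa_const (A r 1) * Z 0 + (\<Sum>p\<le>M. fa_const (A r (Suc (Suc p))) * Z (int (Suc p)))"
      by (subst sum.atMost_Suc_shift) simp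
    finally show ?thesis
      by (simp add: distrib_left sum_distrib_left fa_const_mult mult.assoc del: of_nat_Suc)
  qed
  have E: "(\<Sum>p\<le>M. fa_const (A (r + 1) (Suc p) + \<beta> * A (r - 1) (Suc p)) * Z (int (Suc p)))
     = (\<Sum>p\<le>M. fa_const (A r p) * Z (int (Suc p))) + (\<Sum>p\<le>M. fa_const (\<gamma> * A r (Suc (Suc p))) * Z (int (Suc p)))"
  proof -
    have e: "A (r + 1) (Suc p) + \<beta> * A (r - 1) (Suc p) = A r p + \<gamma> * A r (Suc (Suc p))" for p
      using idp[of "Suc p"] by simp
    show ?thesis unfolding e fa_const_add distrib_right sum.distrib ..
  qed
  have K: "fa_const (A (r + 1) 0 + \<beta> * A (r - 1) 0) * fa_const z0
      = fa_const (\<gamma> * A r 1) * fa_const z0 + fa_const ((A (r + 1) 0 + \<beta> * A (r - 1) 0 - \<gamma> * A r 1) * z0)"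
    unfolding fa_const_mult[symmetric] fa_const_add[symmetric] by (simp add: algebra_simps)
  show ?thesis
    unfolding L R R2 E Z0 K by (simp add: algebra_simps)
qed


lemma deg_hom:
  fixes \<phi> :: "('n \<times> 'n \<times> nat) \<Rightarrow> 'h falg" and Z :: "'n \<Rightarrow> 'n \<Rightarrow> int \<Rightarrow> 'h falg"
    and A :: "int \<Rightarrow> nat \<Rightarrow> complex"
  assumes rep: "\<And>i j t N. 0 \<le> t \<Longrightarrow> t \<le> int N \<Longrightarrow>
      fa_subst \<phi> (oy_t i j t) = (\<Sum>p\<le>N. fa_const (A t p) * Z i j (int p))"
    and Aneg: "\<And>t p. t < 0 \<Longrightarrow> A t p = 0"
    and Avan: "\<And>t p. int p > t \<Longrightarrow> A t p = 0"
    and Zm1: "\<And>i j. Z i j (-1) = 0" and Z0: "\<And>i j. Z i j 0 = fa_const (kdelta i j)"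
    and idp: "\<And>t p. 0 \<le> t \<Longrightarrow> p \<ge> 1 \<Longrightarrow> A (t + 1) p + \<beta> * A (t - 1) p = A t (p - 1) + \<gamma> * A t (p + 1)"
    and rel: "\<And>i j k l p q. Rl \<gamma> Z i j k l (int p) (int q) \<in> fa_ideal S"
  shows "pres_hom (OY_rels \<beta>) S \<phi>"
proof (rule pres_hom_intro)
  fix x :: "('n \<times> 'n \<times> nat) falg" assume "x \<in> OY_rels \<beta>"
  then obtain i j k l r s where x: "x = Rl \<beta> oy_t i j k l (int r) (int s)"
    unfolding OY_rels_eq by blast
  define X where "X = (\<lambda>i j t. fa_subst \<phi> (oy_t i j t))"
  define M where "M = r + s + 1"
  have rep': "X a b t = (\<Sum>p\<le>Suc M. fa_const (A t p) * Z a b (int p))" if "t \<le> int M + 1" for a b t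
  proof (cases "t < 0")
    case True
    then show ?thesis by (simp add: X_def oy_t_def Aneg)
  next
    case False
    then show ?thesis unfolding X_def using that by (intro rep) auto
  qed
  have sh: "Zp \<beta> X a b t = (\<Sum>p\<le>Suc M. fa_const (A t p) * Zp \<gamma> Z a b (int p))
      + fa_const ((A (t + 1) 0 + \<beta> * A (t - 1) 0 - \<gamma> * A t 1) * kdelta a b)"
    if "t \<in> {int r, int s}" for a b t
    unfolding Zp_def
  proof (rule shift_gen[where X="X a b" and Z="Z a b"])
    show "X a b t' = (\<Sum>p\<le>Suc M. fa_const (A t' p) * Z a b (int p))" if "t' \<in> {t - 1, t + 1}" for t'
      using that \<open>t \<in> {int r, int s}\<close> by (intro rep') (auto simp: M_def)
    show "Z a b (-1) = 0" by (rule Zm1)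
    show "Z a b 0 = fa_const (kdelta a b)" by (rule Z0)
    show "A (t + 1) p + \<beta> * A (t - 1) p = A t (p - 1) + \<gamma> * A t (p + 1)" if "p \<ge> 1" for p
      using idp[of t p] that \<open>t \<in> {int r, int s}\<close> by auto
    show "A t (Suc M) = 0" "A t (Suc (Suc M)) = 0"
      using \<open>t \<in> {int r, int s}\<close> by (auto intro!: Avan simp: M_def)
  qed
  have "fa_subst \<phi> x = Rl \<beta> X i j k l (int r) (int s)"
    unfolding x fa_subst_Rl X_def ..
  also have "\<dots> = (\<Sum>p\<le>Suc M. \<Sum>q\<le>Suc M. fa_const (A (int r) p * A (int s) q) * Rl \<gamma> Z i j k l (int p) (int q))"
  proof (rule deg_mix)
    show "X a b t = (\<Sum>p\<le>Suc M. fa_const (A t p) * Z a b (int p))" if "t \<in> {int r, int s}" for a b t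
      using that by (intro rep') (auto simp: M_def)
  qed (rule sh)
  also have "\<dots> \<in> fa_ideal S"
    by (intro ideal_sum ideal_lmult rel)
  finally show "fa_subst \<phi> x \<in> fa_ideal S" .
qed

section \<open>FPS facts\<close>

definition Dbeta :: "complex \<Rightarrow> complex fps" where "Dbeta \<beta> = 1 + fps_const \<beta> * fps_X ^ 2"

lemma D0: "fps_nth (Dbeta \<beta>) 0 = 1" by (simp add: Dbeta_def)

lemma c_eq: "c_beta \<beta> = fps_X * inverse (Dbeta \<beta>)"
  unfolding c_beta_def Dbeta_def[symmetric] by (rule fps_divide_unit) (simp add: D0)

lemma cD: "c_beta \<beta> * Dbeta \<beta> = fps_X"
  by (simp add: c_eq mult.assoc inverse_mult_eq_1 D0)

lemma c_pow_nth_low: "n < p \<Longrightarrow> fps_nth (c_beta \<beta> ^ p) n = 0"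
  by (simp add: c_eq power_mult_distrib fps_X_power_mult_nth)

lemma invD_pow0: "fps_nth (inverse (Dbeta \<beta>) ^ p) 0 = 1"
  by (induction p) (simp_all add: D0)

lemma c_pow_nth_diag: "fps_nth (c_beta \<beta> ^ p) p = 1"
  by (simp add: c_eq power_mult_distrib fps_X_power_mult_nth invD_pow0)

lemma times_D_nth: "fps_nth (g * Dbeta \<beta>) n = fps_nth g n + (if n \<ge> 2 then \<beta> * fps_nth g (n - 2) else 0)"
proof -
  have "g * Dbeta \<beta> = g + fps_const \<beta> * (g * fps_X ^ 2)" by (simp add: Dbeta_def algebra_simps)
  then show ?thesis by (simp add: fps_X_power_mult_right_nth)
qed

lemma c_rec: "p \<ge> 1 \<Longrightarrow> fps_nth (c_beta \<beta> ^ p) (Suc n) + (if n \<ge> 1 then \<beta> * fps_nth (c_beta \<beta> ^ p) (n - 1) else 0)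
   = fps_nth (c_beta \<beta> ^ (p - 1)) n"
proof -
  assume "p \<ge> 1"
  then have "c_beta \<beta> ^ p * Dbeta \<beta> = fps_X * c_beta \<beta> ^ (p - 1)"
  proof -
    obtain q where q: "p = Suc q" using \<open>p \<ge> 1\<close> by (cases p) auto
    have "c_beta \<beta> ^ p * Dbeta \<beta> = c_beta \<beta> ^ q * (c_beta \<beta> * Dbeta \<beta>)"
      by (simp add: q power_Suc2 mult.assoc)
    also have "\<dots> = fps_X * c_beta \<beta> ^ q" unfolding cD by (rule mult.commute)
    finally show ?thesis by (simp add: q)
  qed
  then have "fps_nth (c_beta \<beta> ^ p * Dbeta \<beta>) (Suc n) = fps_nth (c_beta \<beta> ^ (p - 1)) n" by simp
  then show ?thesis unfolding times_D_nth by (cases n) auto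
qed


section \<open>Yangian and evaluation maps\<close>

definition Ay :: "complex \<Rightarrow> int \<Rightarrow> nat \<Rightarrow> complex" where
  "Ay \<beta> t p = (if t < 0 then 0 else fps_nth (c_beta \<beta> ^ p) (nat t))"

lemma Ay_neg: "t < 0 \<Longrightarrow> Ay \<beta> t p = 0" by (simp add: Ay_def)
lemma Ay_van: "int p > t \<Longrightarrow> Ay \<beta> t p = 0"
  by (simp add: Ay_def c_pow_nth_low)
lemma Ay_idp: "0 \<le> t \<Longrightarrow> p \<ge> 1 \<Longrightarrow> Ay \<beta> (t + 1) p + \<beta> * Ay \<beta> (t - 1) p = Ay \<beta> t (p - 1) + 0 * Ay \<beta> t (p + 1)"
proof -
  assume t: "0 \<le> t" and p: "p \<ge> 1"
  obtain n where n: "t = int n" using t by (metis nonneg_eq_int)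
  show ?thesis
    using c_rec[OF p, of \<beta> n]
    by (cases n) (auto simp: Ay_def n nat_add_distrib)
qed

lemma oy_t_pos: "t > 0 \<Longrightarrow> oy_t i j t = fa_var (i, j, nat (t - 1))"
  by (simp add: oy_t_def)

lemma yan_rep0: "0 \<le> t \<Longrightarrow> fa_subst (yan_map \<beta>) (oy_t i j t)
   = (\<Sum>p\<in>{0..nat t}. fa_const (fps_nth (c_beta \<beta> ^ p) (nat t)) * y_t i j p)"
proof (cases "t = 0")
  case True
  then show ?thesis by (simp add: oy_t_def y_t_def)
next
  case False
  assume "0 \<le> t"
  with False have "t > 0" by simp
  then have "nat t = Suc (nat (t - 1))" by simp
  with \<open>t > 0\<close> show ?thesis
    by (simp add: oy_t_pos yan_map_def fa_smult_eq)
qed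

definition Zy :: "'n \<Rightarrow> 'n \<Rightarrow> int \<Rightarrow> ('n \<times> 'n \<times> nat) falg" where
  "Zy i j t = (if t < 0 then 0 else y_t i j (nat t))"

lemma yan_rep: "0 \<le> t \<Longrightarrow> t \<le> int N \<Longrightarrow> fa_subst (yan_map \<beta>) (oy_t i j t)
   = (\<Sum>p\<le>N. fa_const (Ay \<beta> t p) * Zy i j (int p))"
proof -
  assume t: "0 \<le> t" "t \<le> int N"
  have "fa_subst (yan_map \<beta>) (oy_t i j t) = (\<Sum>p\<in>{0..nat t}. fa_const (Ay \<beta> t p) * Zy i j (int p))"
    using t by (simp add: yan_rep0 Ay_def Zy_def)
  also have "\<dots> = (\<Sum>p\<le>N. fa_const (Ay \<beta> t p) * Zy i j (int p))"
    by (rule sum.mono_neutral_left) (use t in \<open>auto simp: Ay_van\<close>)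
  finally show ?thesis .
qed

lemma Y_rel_in: "Rl 0 Zy i j k l (int p) (int q) \<in> fa_ideal Y_rels"
proof -
  have "Rl 0 Zy i j k l (int p) (int q) \<in> Y_rels"
    unfolding Y_rels_def
    by (rule CollectI, rule exI[of _ i], rule exI[of _ j], rule exI[of _ k], rule exI[of _ l],
        rule exI[of _ p], rule exI[of _ q])
       (simp add: Rl_def Zp_def cm_def Zy_def fa_comm_eq fa_mult_eq nat_add_distrib)
  then show ?thesis by (rule fa_ideal.gen)
qed

lemma yan_hom: "pres_hom (OY_rels \<beta>) Y_rels (yan_map \<beta>)"
  by (rule deg_hom[where A="Ay \<beta>" and Z=Zy and \<gamma>=0])
     (auto simp: yan_rep Ay_neg Ay_van Ay_idp Zy_def y_t_def Y_rel_in)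


definition Ze :: "'n \<Rightarrow> 'n \<Rightarrow> int \<Rightarrow> ('n \<times> 'n) falg" where
  "Ze i j t = (if t = 0 then fa_const (kdelta i j) else if t = 1 then fa_var (i, j) else 0)"

lemma c_nth1: "fps_nth (c_beta \<beta>) 1 = 1"
  using c_pow_nth_diag[of \<beta> 1] by simp

lemma c_nth1'[simp]: "fps_nth (c_beta \<beta>) (Suc 0) = 1"
  using c_nth1 by simp

lemma ev_rep: "0 \<le> t \<Longrightarrow> t \<le> int N \<Longrightarrow> fa_subst (ev_map \<beta>) (oy_t i j t)
   = (\<Sum>p\<le>N. fa_const (Ay \<beta> t p) * Ze i j (int p))"
proof -
  assume t: "0 \<le> t" "t \<le> int N"
  show ?thesis
  proof (cases "t = 0")
    case True
    have "(\<Sum>p\<le>N. fa_const (Ay \<beta> t p) * Ze i j (int p)) = (\<Sum>p\<in>{0}. fa_const (Ay \<beta> t p) * Ze i j (int p))"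
      by (rule sum.mono_neutral_right) (auto simp: True Ay_van)
    then show ?thesis by (simp add: True oy_t_def Ay_def Ze_def)
  next
    case False
    then have t1: "t \<ge> 1" "N \<ge> 1" using t by auto
    have "(\<Sum>p\<le>N. fa_const (Ay \<beta> t p) * Ze i j (int p)) = (\<Sum>p\<in>{0,1}. fa_const (Ay \<beta> t p) * Ze i j (int p))"
      by (rule sum.mono_neutral_right) (use t1 in \<open>auto simp: Ze_def\<close>)
    also have "\<dots> = fa_const (fps_nth (c_beta \<beta>) (nat t)) * fa_var (i, j)"
      using t1 by (simp add: Ay_def Ze_def)
    also have "\<dots> = fa_subst (ev_map \<beta>) (oy_t i j t)"
      using t1 by (simp add: oy_t_pos ev_map_def fa_smult_eq Suc_nat_eq_nat_zadd1)
    finally show ?thesis ..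
  qed
qed

definition urel :: "'n \<Rightarrow> 'n \<Rightarrow> 'n \<Rightarrow> 'n \<Rightarrow> ('n \<times> 'n) falg" where
  "urel i j k l = cm (fa_var (i, j)) (fa_var (k, l))
     - (fa_const (kdelta k j) * fa_var (i, l) - fa_const (kdelta i l) * fa_var (k, j))"

lemma urel_in: "urel i j k l \<in> fa_ideal U_rels"
proof -
  have "urel i j k l \<in> U_rels"
    unfolding U_rels_def urel_def by (auto simp: fa_comm_eq cm_def fa_smult_eq)
  then show ?thesis by (rule fa_ideal.gen)
qed

lemma var_const: "fa_var g * fa_const c = fa_const c * fa_var g"
  by (rule fa_const_central[symmetric])

lemma cm_const_l[simp]: "cm (fa_const c) x = 0" by (simp add: cm_def fa_const_central)
lemma cm_const_r[simp]: "cm x (fa_const c) = 0" by (simp add: cm_def fa_const_central)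
lemma cm_zero[simp]: "cm 0 x = 0" "cm x 0 = 0" by (simp_all add: cm_def)

lemma ev_rel: "Rl 0 Ze i j k l (int p) (int q) \<in> fa_ideal U_rels"
proof -
  consider "p = 0" "q = 0" | "p = 0" "q = 1" | "p = 1" "q = 0" | "p = 1" "q = 1"
    | "p \<ge> 2 \<or> q \<ge> 2" by linarith
  then show ?thesis
  proof cases
    case 1
    then show ?thesis
      by (simp add: Rl_def Zp_def Ze_def fa_ideal.zero)
  next
    case 2
    then have "Rl 0 Ze i j k l (int p) (int q) = urel i j k l"
      by (simp add: Rl_def Zp_def Ze_def urel_def var_const)
    then show ?thesis using urel_in by simp
  next
    case 3
    then have "Rl 0 Ze i j k l (int p) (int q) = - urel i j k l"
      by (simp add: Rl_def Zp_def Ze_def urel_def var_const)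
    then show ?thesis using urel_in ideal_uminus by metis
  next
    case 4
    then show ?thesis by (simp add: Rl_def Zp_def Ze_def fa_ideal.zero)
  next
    case 5
    then show ?thesis by (auto simp: Rl_def Zp_def Ze_def fa_ideal.zero)
  qed
qed

lemma ev_hom: "pres_hom (OY_rels \<beta>) U_rels (ev_map \<beta>)"
  by (rule deg_hom[where A="Ay \<beta>" and Z=Ze and \<gamma>=0])
     (auto simp: ev_rep Ay_neg Ay_van Ay_idp Ze_def ev_rel)

lemma ev_emb: "fa_subst (ev_map \<beta>) (oy_emb g) = fa_var g"
  by (cases g) (simp add: oy_emb_def oy_t_def ev_map_def fa_smult_eq c_nth1)

lemma emb_hom: "pres_hom U_rels (OY_rels \<beta>) oy_emb"
proof (rule pres_hom_intro)
  fix x :: "('n \<times> 'n) falg" assume "x \<in> U_rels"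
  then obtain i j k l where x: "x = urel i j k l"
    unfolding U_rels_def urel_def by (auto simp: fa_comm_eq cm_def fa_smult_eq)
  have "fa_subst oy_emb x = - Rl \<beta> oy_t i j k l (int 1) (int 0)"
    by (simp add: x urel_def Rl_def Zp_def oy_emb_def fa_subst_cm fa_subst_diff fa_subst_mult
        oy_t_def var_const)
  moreover have "Rl \<beta> oy_t i j k l (int 1) (int 0) \<in> fa_ideal (OY_rels \<beta>)"
    unfolding OY_rels_eq by (rule fa_ideal.gen) blast
  ultimately show "fa_subst oy_emb x \<in> fa_ideal (OY_rels \<beta>)"
    using ideal_uminus by metis
qed


section \<open>Multiplication automorphism\<close>

definition Am :: "complex fps \<Rightarrow> int \<Rightarrow> nat \<Rightarrow> complex" where
  "Am f t p = (if t < 0 \<or> int p > t then 0 else fps_nth f (nat t - p))"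

lemma Am_idp: "0 \<le> t \<Longrightarrow> p \<ge> 1 \<Longrightarrow> Am f (t + 1) p + \<beta> * Am f (t - 1) p = Am f t (p - 1) + \<beta> * Am f t (p + 1)"
proof -
  assume t: "0 \<le> t" and p: "p \<ge> 1"
  obtain n where n: "t = int n" using t by (metis nonneg_eq_int)
  have a: "Am f (t + 1) p = Am f t (p - 1)"
    using p by (auto simp: Am_def n nat_add_distrib Suc_diff_le)
  have b: "Am f (t - 1) p = Am f t (p + 1)"
    using p by (auto simp: Am_def n nat_diff_distrib)
  show ?thesis by (simp add: a b)
qed

lemma mult_rep0: "fps_nth f 0 = 1 \<Longrightarrow> 0 \<le> t \<Longrightarrow> fa_subst (mult_map f) (oy_t i j t)
   = (\<Sum>p\<in>{0..nat t}. fa_const (Am f t p) * oy_t i j (int p))"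
proof (cases "t = 0")
  case True
  assume "fps_nth f 0 = 1"
  with True show ?thesis by (simp add: oy_t_def Am_def)
next
  case False
  assume "0 \<le> t"
  with False have "t > 0" by simp
  then have nt: "Suc (nat (t - 1)) = nat t" by simp
  have "fa_subst (mult_map f) (oy_t i j t) = mult_map f (i, j, nat (t - 1))"
    using \<open>t > 0\<close> by (simp add: oy_t_pos)
  also have "\<dots> = (\<Sum>s\<in>{0..nat t}. fa_const (fps_nth f (nat t - s)) * oy_t i j (int s))"
    by (simp only: mult_map_def prod.case fa_smult_eq nt)
  also have "\<dots> = (\<Sum>p\<in>{0..nat t}. fa_const (Am f t p) * oy_t i j (int p))"
    using \<open>t > 0\<close> by (intro sum.cong refl) (auto simp: Am_def)
  finally show ?thesis .
qed

lemma mult_rep: "fps_nth f 0 = 1 \<Longrightarrow> 0 \<le> t \<Longrightarrow> t \<le> int N \<Longrightarrow> fa_subst (mult_map f) (oy_t i j t)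
   = (\<Sum>p\<le>N. fa_const (Am f t p) * oy_t i j (int p))"
proof -
  assume f: "fps_nth f 0 = 1" and t: "0 \<le> t" "t \<le> int N"
  have "fa_subst (mult_map f) (oy_t i j t) = (\<Sum>p\<in>{0..nat t}. fa_const (Am f t p) * oy_t i j (int p))"
    by (rule mult_rep0[OF f t(1)])
  also have "\<dots> = (\<Sum>p\<le>N. fa_const (Am f t p) * oy_t i j (int p))"
    by (rule sum.mono_neutral_left) (use t in \<open>auto simp: Am_def\<close>)
  finally show ?thesis .
qed

lemma OY_rel_in: "Rl \<beta> oy_t i j k l (int p) (int q) \<in> fa_ideal (OY_rels \<beta>)"
  unfolding OY_rels_eq by (rule fa_ideal.gen) blast

lemma mult_hom: "fps_nth f 0 = 1 \<Longrightarrow> pres_hom (OY_rels \<beta>) (OY_rels \<beta>) (mult_map f)"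
proof -
  assume f0: "fps_nth f 0 = 1"
  show ?thesis
  proof (rule deg_hom[where A="Am f" and Z=oy_t and \<gamma>=\<beta>])
    show "fa_subst (mult_map f) (oy_t i j t) = (\<Sum>p\<le>N. fa_const (Am f t p) * oy_t i j (int p))"
      if "0 \<le> t" "t \<le> int N" for i j t N
      by (rule mult_rep[OF f0 that])
    show "Am f (t + 1) p + \<beta> * Am f (t - 1) p = Am f t (p - 1) + \<beta> * Am f t (p + 1)"
      if "0 \<le> t" "1 \<le> p" for t p
      by (rule Am_idp[OF that])
  qed (auto simp: Am_def oy_t_def OY_rel_in)
qed

lemma conv: "q \<le> n \<Longrightarrow> (\<Sum>s\<in>{0..n}. fps_nth f (n - s) * Am g (int s) q) = fps_nth (g * f) (n - q)"
proof -
  assume q: "q \<le> n"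
  have "(\<Sum>s\<in>{0..n}. fps_nth f (n - s) * Am g (int s) q) = (\<Sum>s\<in>{q..n}. fps_nth f (n - s) * fps_nth g (s - q))"
    by (rule sum.mono_neutral_cong_right) (auto simp: Am_def)
  also have "\<dots> = (\<Sum>s\<in>{0 + q..(n - q) + q}. fps_nth f (n - s) * fps_nth g (s - q))"
    using q by simp
  also have "\<dots> = (\<Sum>i\<in>{0..n - q}. fps_nth f (n - q - i) * fps_nth g i)"
    by (subst sum.shift_bounds_cl_nat_ivl) (simp add: algebra_simps)
  also have "\<dots> = fps_nth (g * f) (n - q)"
    unfolding fps_mult_nth by (intro sum.cong refl) (simp add: mult.commute)
  finally show ?thesis .
qed

lemma mult_comp:
  assumes f0: "fps_nth f 0 = 1" and g0: "fps_nth g 0 = 1" and gf: "g * f = 1"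
  shows "fa_subst (mult_map g) (mult_map f x) = fa_var x"
proof -
  obtain i j m where x: "x = (i, j, m)" by (cases x) auto
  define n where "n = Suc m"
  have "fa_subst (mult_map g) (mult_map f x)
     = (\<Sum>s\<in>{0..n}. fa_const (fps_nth f (n - s)) * fa_subst (mult_map g) (oy_t i j (int s)))"
  proof -
    have mx: "mult_map f x = (\<Sum>s\<in>{0..n}. fa_const (fps_nth f (n - s)) * oy_t i j (int s))"
      by (simp only: x mult_map_def prod.case n_def fa_smult_eq)
    show ?thesis by (simp only: mx fa_subst_sum fa_subst_mult fa_subst_const)
  qed
  also have "\<dots> = (\<Sum>s\<in>{0..n}. fa_const (fps_nth f (n - s)) * (\<Sum>q\<le>n. fa_const (Am g (int s) q) * oy_t i j (int q)))"
    by (intro sum.cong refl arg_cong2[where f="(*)"] mult_rep g0) auto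
  also have "\<dots> = (\<Sum>q\<le>n. fa_const (\<Sum>s\<in>{0..n}. fps_nth f (n - s) * Am g (int s) q) * oy_t i j (int q))"
    by (simp add: sum_distrib_left sum_distrib_right fa_const_sum fa_const_mult mult.assoc)
       (rule sum.swap)
  also have "\<dots> = (\<Sum>q\<le>n. fa_const (if q = n then 1 else 0) * oy_t i j (int q))"
    by (intro sum.cong refl) (auto simp: conv gf)
  also have "\<dots> = (\<Sum>q\<le>n. if q = n then oy_t i j (int q) else 0)"
    by (intro sum.cong refl) simp
  also have "\<dots> = oy_t i j (int n)"
    by (simp add: sum.delta)
  also have "\<dots> = fa_var x" by (simp add: oy_t_def x n_def)
  finally show ?thesis .
qed

lemma mult_aut: "fps_nth f 0 = 1 \<Longrightarrow> pres_aut (OY_rels \<beta>) (mult_map f)"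
proof -
  assume f0: "fps_nth f 0 = 1"
  define g where "g = inverse f"
  have g0: "fps_nth g 0 = 1" by (simp add: g_def f0)
  have gf: "g * f = 1" unfolding g_def by (rule inverse_mult_eq_1) (simp add: f0)
  have fg: "f * g = 1" unfolding g_def by (rule inverse_mult_eq_1') (simp add: f0)
  show ?thesis
    by (rule pres_aut_intro[where \<psi>="mult_map g"])
       (use f0 g0 gf fg in \<open>auto intro: mult_hom mult_comp\<close>)
qed


section \<open>Conjugation automorphism\<close>

lemma fa_const_swap: "fa_const a * (fa_const b * x) = fa_const b * (fa_const a * x)"
  by (simp add: mult.assoc[symmetric] fa_const_mult[symmetric] mult.commute)

lemma swap4:
  fixes G :: "('n::finite \<times> 'n) \<Rightarrow> ('n \<times> 'n) \<Rightarrow> 'h falg"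
  shows "(\<Sum>x\<in>UNIV. \<Sum>y\<in>UNIV. G x y) = (\<Sum>x\<in>UNIV. \<Sum>y\<in>UNIV. G (fst y, snd x) (fst x, snd y))"
proof -
  have "(\<Sum>x\<in>UNIV. \<Sum>y\<in>UNIV. G x y) = (\<Sum>z\<in>UNIV \<times> UNIV. G (fst z) (snd z))"
    by (simp add: sum.cartesian_product split_def)
  also have "\<dots> = (\<Sum>z\<in>UNIV \<times> UNIV. G (fst (snd z), snd (fst z)) (fst (fst z), snd (snd z)))"
    by (rule sum.reindex_bij_witness[where i="\<lambda>z. ((fst (snd z), snd (fst z)), (fst (fst z), snd (snd z)))"
          and j="\<lambda>z. ((fst (snd z), snd (fst z)), (fst (fst z), snd (snd z)))"]) auto
  also have "\<dots> = (\<Sum>x\<in>UNIV. \<Sum>y\<in>UNIV. G (fst y, snd x) (fst x, snd y))"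
    by (simp add: sum.cartesian_product split_def)
  finally show ?thesis .
qed

definition wt :: "complex^'n^'n \<Rightarrow> complex^'n^'n \<Rightarrow> 'n \<Rightarrow> 'n \<Rightarrow> ('n \<times> 'n) \<Rightarrow> complex" where
  "wt B C i j ab = B $ i $ fst ab * C $ snd ab $ j"

lemma conj_mix:
  fixes X Z :: "'n::finite \<Rightarrow> 'n \<Rightarrow> int \<Rightarrow> 'h falg"
  assumes rep: "\<And>i j t. X i j t = (\<Sum>ab\<in>UNIV. fa_const (wt B C i j ab) * Z (fst ab) (snd ab) t)"
  shows "Rl \<beta> X i j k l r s = (\<Sum>ab\<in>UNIV. \<Sum>cd\<in>UNIV. fa_const (wt B C i j ab * wt B C k l cd)
           * Rl \<beta> Z (fst ab) (snd ab) (fst cd) (snd cd) r s)"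
proof -
  have zp: "Zp \<beta> X a b t = (\<Sum>ab\<in>UNIV. fa_const (wt B C a b ab) * Zp \<beta> Z (fst ab) (snd ab) t)" for a b t
    unfolding Zp_def rep by (simp add: sum_distrib_left distrib_left sum.distrib fa_const_swap)
  have c1: "cm (Zp \<beta> X i j r) (X k l s) = (\<Sum>ab\<in>UNIV. \<Sum>cd\<in>UNIV. fa_const (wt B C i j ab * wt B C k l cd)
           * cm (Zp \<beta> Z (fst ab) (snd ab) r) (Z (fst cd) (snd cd) s))"
    unfolding zp rep[of k l s] by (rule cm_bil)
  have c2: "cm (X i j r) (Zp \<beta> X k l s) = (\<Sum>ab\<in>UNIV. \<Sum>cd\<in>UNIV. fa_const (wt B C i j ab * wt B C k l cd)
           * cm (Z (fst ab) (snd ab) r) (Zp \<beta> Z (fst cd) (snd cd) s))"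
    unfolding zp rep[of i j r] by (rule cm_bil)
  have "X k j r * X i l s - X k j s * X i l r = (\<Sum>ab\<in>UNIV. \<Sum>cd\<in>UNIV. fa_const (wt B C k j ab * wt B C i l cd)
           * (Z (fst ab) (snd ab) r * Z (fst cd) (snd cd) s - Z (fst ab) (snd ab) s * Z (fst cd) (snd cd) r))"
    unfolding rep[of k j] rep[of i l] bil by (simp add: sum_subtractf right_diff_distrib)
  also have "\<dots> = (\<Sum>ab\<in>UNIV. \<Sum>cd\<in>UNIV. fa_const (wt B C k j (fst cd, snd ab) * wt B C i l (fst ab, snd cd))
           * (Z (fst cd) (snd ab) r * Z (fst ab) (snd cd) s - Z (fst cd) (snd ab) s * Z (fst ab) (snd cd) r))"
    using swap4[where G="\<lambda>x y. fa_const (wt B C k j x * wt B C i l y) * (Z (fst x) (snd x) r * Z (fst y) (snd y) s - Z (fst x) (snd x) s * Z (fst y) (snd y) r)"]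
    by simp
  also have "\<dots> = (\<Sum>ab\<in>UNIV. \<Sum>cd\<in>UNIV. fa_const (wt B C i j ab * wt B C k l cd)
           * (Z (fst cd) (snd ab) r * Z (fst ab) (snd cd) s - Z (fst cd) (snd ab) s * Z (fst ab) (snd cd) r))"
    by (intro sum.cong refl) (simp add: wt_def mult_ac)
  finally have q: "X k j r * X i l s - X k j s * X i l r = \<dots>" .
  show ?thesis
    unfolding Rl_def c1 c2 q
    by (simp add: sum_subtractf right_diff_distrib)
qed



lemma minv: "invertible (B::complex^'n::finite^'n) \<Longrightarrow> B ** matrix_inv B = mat 1 \<and> matrix_inv B ** B = mat 1"
  unfolding invertible_def matrix_inv_def by (rule someI_ex)

lemma minv_inv: "invertible (B::complex^'n::finite^'n) \<Longrightarrow> invertible (matrix_inv B)"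
proof -
  assume h: "invertible B"
  from minv[OF h] show ?thesis unfolding invertible_def by blast
qed

lemma conj_pair: "conj_map P (i, j, m) = (\<Sum>ab\<in>UNIV. fa_const (wt P (matrix_inv P) i j ab) * oy_t (fst ab) (snd ab) (int (Suc m)))"
  by (simp add: conj_map_def wt_def fa_smult_eq sum.cartesian_product split_def
)

lemma sum_pair_delta: "(\<Sum>ab\<in>(UNIV::('n::finite \<times> 'n) set). fa_const (kdelta i (fst ab) * kdelta (snd ab) j) * Y ab) = Y (i, j)"
proof -
  have "(\<Sum>ab\<in>(UNIV::('n \<times> 'n) set). fa_const (kdelta i (fst ab) * kdelta (snd ab) j) * Y ab)
     = (\<Sum>ab\<in>UNIV. if ab = (i, j) then Y ab else 0)"
    by (intro sum.cong refl) (auto simp: kdelta_def)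
  also have "\<dots> = Y (i, j)" by (simp add: sum.delta')
  finally show ?thesis .
qed

lemma mat_mult_kdelta: "(A::complex^'n::finite^'n) ** B = mat 1 \<Longrightarrow> (\<Sum>a\<in>UNIV. A $ i $ a * B $ a $ c) = kdelta i c"
proof -
  assume "A ** B = mat 1"
  then have "(A ** B) $ i $ c = (mat 1 :: complex^'n^'n) $ i $ c" by simp
  then show ?thesis by (simp add: matrix_matrix_mult_def mat_def kdelta_def)
qed

lemma conj_rep:
  assumes inv: "B ** matrix_inv B = mat 1"
  shows "fa_subst (conj_map B) (oy_t i j t) = (\<Sum>ab\<in>UNIV. fa_const (wt B (matrix_inv B) i j ab) * oy_t (fst ab) (snd ab) t)"
proof -
  consider "t < 0" | "t = 0" | "t > 0" by linarith
  then show ?thesis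
  proof cases
    case 1 then show ?thesis by (simp add: oy_t_def)
  next
    case 2
    have "(\<Sum>ab\<in>(UNIV::('a \<times> 'a) set). fa_const (wt B (matrix_inv B) i j ab) * oy_t (fst ab) (snd ab) t)
       = fa_const (\<Sum>ab\<in>(UNIV::('a \<times> 'a) set). wt B (matrix_inv B) i j ab * kdelta (fst ab) (snd ab))"
      by (simp add: 2 oy_t_def fa_const_sum fa_const_mult)
    also have "(\<Sum>ab\<in>(UNIV::('a \<times> 'a) set). wt B (matrix_inv B) i j ab * kdelta (fst ab) (snd ab))
       = (\<Sum>a\<in>UNIV. B $ i $ a * matrix_inv B $ a $ j)"
    proof -
      have "(\<Sum>ab\<in>(UNIV::('a \<times> 'a) set). wt B (matrix_inv B) i j ab * kdelta (fst ab) (snd ab))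
          = (\<Sum>a\<in>UNIV. \<Sum>b\<in>UNIV. B $ i $ a * matrix_inv B $ b $ j * kdelta a b)"
        by (simp add: wt_def sum.cartesian_product split_def)
      also have "\<dots> = (\<Sum>a\<in>UNIV. B $ i $ a * matrix_inv B $ a $ j)"
        by (intro sum.cong refl) (simp add: kdelta_def if_distrib sum.delta cong: if_cong)
      finally show ?thesis .
    qed
    also have "\<dots> = kdelta i j" by (rule mat_mult_kdelta[OF inv])
    finally show ?thesis by (simp add: 2 oy_t_def)
  next
    case 3
    have "fa_subst (conj_map B) (oy_t i j t) = conj_map B (i, j, nat (t - 1))"
      using 3 by (simp add: oy_t_pos)
    also have "\<dots> = (\<Sum>ab\<in>UNIV. fa_const (wt B (matrix_inv B) i j ab) * oy_t (fst ab) (snd ab) (int (Suc (nat (t - 1)))))"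
      by (rule conj_pair)
    also have "int (Suc (nat (t - 1))) = t" using 3 by simp
    finally show ?thesis .
  qed
qed

lemma conj_hom:
  assumes inv: "B ** matrix_inv B = mat 1"
  shows "pres_hom (OY_rels \<beta>) (OY_rels \<beta>) (conj_map (B::complex^'n::finite^'n))"
proof (rule pres_hom_intro)
  fix x :: "('n \<times> 'n \<times> nat) falg" assume "x \<in> OY_rels \<beta>"
  then obtain i j k l r s where x: "x = Rl \<beta> oy_t i j k l (int r) (int s)"
    unfolding OY_rels_eq by blast
  have "fa_subst (conj_map B) x = Rl \<beta> (\<lambda>i j t. fa_subst (conj_map B) (oy_t i j t)) i j k l (int r) (int s)"
    unfolding x fa_subst_Rl ..
  also have "\<dots> = (\<Sum>ab\<in>UNIV. \<Sum>cd\<in>UNIV. fa_const (wt B (matrix_inv B) i j ab * wt B (matrix_inv B) k l cd)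
           * Rl \<beta> oy_t (fst ab) (snd ab) (fst cd) (snd cd) (int r) (int s))"
    by (rule conj_mix) (rule conj_rep[OF inv])
  also have "\<dots> \<in> fa_ideal (OY_rels \<beta>)"
    by (intro ideal_sum ideal_lmult OY_rel_in)
  finally show "fa_subst (conj_map B) x \<in> fa_ideal (OY_rels \<beta>)" .
qed





lemma conj_comp:
  fixes P Q :: "complex^'n::finite^'n"
  assumes PQ: "P ** Q = mat 1" and IQP: "matrix_inv Q ** matrix_inv P = mat 1"
  shows "fa_subst (conj_map Q) (conj_map P x) = fa_var x"
proof -
  obtain i j m where x: "x = (i, j, m)" by (cases x) auto
  define T where "T = int (Suc m)"
  define Y where "Y = (\<lambda>cd::'n \<times> 'n. oy_t (fst cd) (snd cd) T)"
  have sQ: "fa_subst (conj_map Q) (oy_t a b T) = (\<Sum>cd\<in>UNIV. fa_const (wt Q (matrix_inv Q) a b cd) * Y cd)" for a b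
  proof -
    have oT: "oy_t a b T = fa_var (a, b, m)" by (simp add: T_def oy_t_def)
    show ?thesis unfolding Y_def oT fa_subst_var by (simp only: conj_pair T_def)
  qed
  have "fa_subst (conj_map Q) (conj_map P x)
      = (\<Sum>ab\<in>UNIV. fa_const (wt P (matrix_inv P) i j ab) * fa_subst (conj_map Q) (oy_t (fst ab) (snd ab) T))"
    by (simp only: x conj_pair T_def fa_subst_sum fa_subst_mult fa_subst_const)
  also have "\<dots> = (\<Sum>ab\<in>UNIV. \<Sum>cd\<in>UNIV. fa_const (wt P (matrix_inv P) i j ab * wt Q (matrix_inv Q) (fst ab) (snd ab) cd) * Y cd)"
    by (simp only: sQ sum_distrib_left mult.assoc[symmetric] fa_const_mult)
  also have "\<dots> = (\<Sum>cd\<in>UNIV. \<Sum>ab\<in>UNIV. fa_const (wt P (matrix_inv P) i j ab * wt Q (matrix_inv Q) (fst ab) (snd ab) cd) * Y cd)"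
    by (rule sum.swap)
  also have "\<dots> = (\<Sum>cd\<in>UNIV. fa_const (\<Sum>ab\<in>UNIV. wt P (matrix_inv P) i j ab * wt Q (matrix_inv Q) (fst ab) (snd ab) cd) * Y cd)"
    by (simp only: sum_distrib_right fa_const_sum)
  also have "\<dots> = (\<Sum>cd\<in>UNIV. fa_const (kdelta i (fst cd) * kdelta (snd cd) j) * Y cd)"
  proof (intro sum.cong refl arg_cong2[where f="(*)"] arg_cong[where f=fa_const])
    fix cd :: "'n \<times> 'n"
    have "(\<Sum>ab\<in>UNIV. wt P (matrix_inv P) i j ab * wt Q (matrix_inv Q) (fst ab) (snd ab) cd)
        = (\<Sum>a\<in>UNIV. \<Sum>b\<in>UNIV. (P $ i $ a * Q $ a $ fst cd) * (matrix_inv Q $ snd cd $ b * matrix_inv P $ b $ j))"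
      by (simp add: wt_def sum.cartesian_product split_def mult_ac)
    also have "\<dots> = (\<Sum>a\<in>UNIV. P $ i $ a * Q $ a $ fst cd) * (\<Sum>b\<in>UNIV. matrix_inv Q $ snd cd $ b * matrix_inv P $ b $ j)"
      by (simp add: sum_product)
    also have "\<dots> = kdelta i (fst cd) * kdelta (snd cd) j"
      by (simp add: mat_mult_kdelta[OF PQ] mat_mult_kdelta[OF IQP])
    finally show "(\<Sum>ab\<in>UNIV. wt P (matrix_inv P) i j ab * wt Q (matrix_inv Q) (fst ab) (snd ab) cd) = kdelta i (fst cd) * kdelta (snd cd) j" .
  qed
  also have "\<dots> = Y (i, j)" by (rule sum_pair_delta)
  also have "\<dots> = fa_var x" by (simp add: Y_def T_def x oy_t_def)
  finally show ?thesis .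
qed

lemma conj_aut:
  assumes B: "invertible (B::complex^'n::finite^'n)"
  shows "pres_aut (OY_rels \<beta>) (conj_map B)"
proof -
  have h1: "B ** matrix_inv B = mat 1" "matrix_inv B ** B = mat 1" using minv[OF B] by auto
  have h2: "matrix_inv B ** matrix_inv (matrix_inv B) = mat 1" "matrix_inv (matrix_inv B) ** matrix_inv B = mat 1"
    using minv[OF minv_inv[OF B]] by auto
  show ?thesis
  proof (rule pres_aut_intro[where \<psi>="conj_map (matrix_inv B)"])
    show "pres_hom (OY_rels \<beta>) (OY_rels \<beta>) (conj_map B)" by (rule conj_hom[OF h1(1)])
    show "pres_hom (OY_rels \<beta>) (OY_rels \<beta>) (conj_map (matrix_inv B))" by (rule conj_hom[OF h2(1)])
    show "fa_subst (conj_map (matrix_inv B)) (conj_map B g) = fa_var g" for g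
      by (rule conj_comp[OF h1(1) h2(2)])
    show "fa_subst (conj_map B) (conj_map (matrix_inv B) g) = fa_var g" for g
      by (rule conj_comp[OF h1(2) h2(1)])
  qed
qed

theorem mainTheorem7:
  fixes \<beta> :: complex
  assumes "\<beta> \<noteq> 0"
  shows "pres_hom (OY_rels \<beta>) (U_rels :: ('n::finite \<times> 'n) falg set) (ev_map \<beta>)
       \<and> pres_surj (OY_rels \<beta>) (U_rels :: ('n \<times> 'n) falg set) (ev_map \<beta>)
       \<and> pres_hom (U_rels :: ('n \<times> 'n) falg set) (OY_rels \<beta>) oy_emb
       \<and> pres_inj (U_rels :: ('n \<times> 'n) falg set) (OY_rels \<beta>) oy_emb
       \<and> pres_hom (OY_rels \<beta> :: ('n \<times> 'n \<times> nat) falg set) Y_rels (yan_map \<beta>)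
       \<and> (\<forall>f. fps_nth f 0 = 1 \<longrightarrow> pres_aut (OY_rels \<beta> :: ('n \<times> 'n \<times> nat) falg set) (mult_map f))
       \<and> (\<forall>B :: complex^'n^'n. invertible B \<longrightarrow> pres_aut (OY_rels \<beta>) (conj_map B))"
  using ev_hom[of \<beta>] pres_surj_intro[where \<phi>="ev_map \<beta>" and \<psi>=oy_emb, OF ev_emb]
    emb_hom[of \<beta>] pres_inj_intro[where \<psi>="ev_map \<beta>" and \<phi>=oy_emb, OF ev_hom ev_emb]
    yan_hom[of \<beta>] mult_aut conj_aut
  by blast

end
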